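(* Let $(X,d)$ be an ultra-metric space and let $\pi:G\times X\to X$ be a continuous action of a topological group $G$ which is $\pi$-uniform with respect to the uniformity of $d$. Suppose some orbit $Gx_0$ ($x_0\in X$) is $d$-bounded. Then there exist an ultra-normed Boolean group $(E,\|\cdot\|)$ on which $G$ acts continuously by group automorphisms (with respect to the topology of $\|\cdot\|$) and a $G$-equivariant isometric embedding $\alpha:X\hookrightarrow E$ (i.e. $\|\alpha(x)-\alpha(y)\|=d(x,y)$) such that $\alpha(X)$ is closed in $E$.
   Context: An ultra-metric is a metric with $d(x,z)\le\max\{d(x,y),d(y,z)\}$. An ultra-norm on an abelian group $E$ is a function $\|\cdot\|:E\to[0,\infty)$ with $\|u\|=0\iff u=0$, $\|u\|=\|-u\|$, and $\|u+v\|\le\max\{\|u\|,\|v\|\}$; $E$ is topologized by the metric $\|u-v\|$. A Boolean group is an abelian group with $x+x=0$ for all $x$. An action on a uniform space is $\pi$-uniform if for every entourage $\varepsilon$ and $g_0\in G$ there exist an entourage $\delta$ and a neighborhood $O$ of $g_0$ such that $(gx,gy)\in\varepsilon$ whenever $(x,y)\in\delta$ and $g\in O$. *)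

theory Defs
  imports "HOL-Analysis.Analysis" "HOL-Algebra.Group"
begin

definition ultrametric :: "'a set \<Rightarrow> ('a \<Rightarrow> 'a \<Rightarrow> real) \<Rightarrow> bool" where
  "ultrametric M d \<longleftrightarrow> Metric_space M d \<and>
     (\<forall>x\<in>M. \<forall>y\<in>M. \<forall>z\<in>M. d x z \<le> max (d x y) (d y z))"

definition topological_group :: "('g, 'b) monoid_scheme \<Rightarrow> 'g topology \<Rightarrow> bool" where
  "topological_group G T \<longleftrightarrow> group G \<and> topspace T = carrier G \<and>
     continuous_map (prod_topology T T) T (\<lambda>(a, b). a \<otimes>\<^bsub>G\<^esub> b) \<and>
     continuous_map T T (\<lambda>a. inv\<^bsub>G\<^esub> a)"

definition is_action :: "('g, 'b) monoid_scheme \<Rightarrow> 'x set \<Rightarrow> ('g \<Rightarrow> 'x \<Rightarrow> 'x) \<Rightarrow> bool" where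
  "is_action G X \<pi> \<longleftrightarrow>
     (\<forall>g\<in>carrier G. \<forall>x\<in>X. \<pi> g x \<in> X) \<and>
     (\<forall>x\<in>X. \<pi> \<one>\<^bsub>G\<^esub> x = x) \<and>
     (\<forall>g\<in>carrier G. \<forall>h\<in>carrier G. \<forall>x\<in>X. \<pi> (g \<otimes>\<^bsub>G\<^esub> h) x = \<pi> g (\<pi> h x))"

text \<open>\<pi>-uniformity of an action w.r.t. the uniformity of the metric d
  (the metric uniformity has the basic entourages {(x,y). d x y < e}, e > 0;
   a neighbourhood of g0 is a set containing an open set containing g0).\<close>
definition pi_uniform :: "('g, 'b) monoid_scheme \<Rightarrow> 'g topology \<Rightarrow> 'x set \<Rightarrow>
     ('x \<Rightarrow> 'x \<Rightarrow> real) \<Rightarrow> ('g \<Rightarrow> 'x \<Rightarrow> 'x) \<Rightarrow> bool" where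
  "pi_uniform G T X d \<pi> \<longleftrightarrow>
     (\<forall>\<epsilon>>0. \<forall>g0\<in>carrier G. \<exists>\<delta>>0. \<exists>U. openin T U \<and> g0 \<in> U \<and>
        (\<forall>g\<in>U. \<forall>x\<in>X. \<forall>y\<in>X. d x y < \<delta> \<longrightarrow> d (\<pi> g x) (\<pi> g y) < \<epsilon>))"

text \<open>Ultra-norm on an abelian group E (written multiplicatively in HOL-Algebra).\<close>
definition ultranorm :: "('e, 'c) monoid_scheme \<Rightarrow> ('e \<Rightarrow> real) \<Rightarrow> bool" where
  "ultranorm E nrm \<longleftrightarrow>
     (\<forall>u\<in>carrier E. 0 \<le> nrm u) \<and>
     (\<forall>u\<in>carrier E. nrm u = 0 \<longleftrightarrow> u = \<one>\<^bsub>E\<^esub>) \<and>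
     (\<forall>u\<in>carrier E. nrm (inv\<^bsub>E\<^esub> u) = nrm u) \<and>
     (\<forall>u\<in>carrier E. \<forall>v\<in>carrier E. nrm (u \<otimes>\<^bsub>E\<^esub> v) \<le> max (nrm u) (nrm v))"

definition boolean_group :: "('e, 'c) monoid_scheme \<Rightarrow> bool" where
  "boolean_group E \<longleftrightarrow> comm_group E \<and> (\<forall>x\<in>carrier E. x \<otimes>\<^bsub>E\<^esub> x = \<one>\<^bsub>E\<^esub>)"

definition norm_dist :: "('e, 'c) monoid_scheme \<Rightarrow> ('e \<Rightarrow> real) \<Rightarrow> 'e \<Rightarrow> 'e \<Rightarrow> real" where
  "norm_dist E nrm u v = nrm (u \<otimes>\<^bsub>E\<^esub> inv\<^bsub>E\<^esub> v)"

end

theory Submission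
  imports Defs
begin



definition symd :: "'a set \<Rightarrow> 'a set \<Rightarrow> 'a set" where
  "symd A B = (A - B) \<union> (B - A)"

lemma card_symd:
  assumes "finite P" "finite Q"
  shows "card (symd P Q) + 2 * card (P \<inter> Q) = card P + card Q"
proof -
  have "symd P Q = (P \<union> Q) - (P \<inter> Q)" by (auto simp: symd_def)
  have "card (symd P Q) = card (P \<union> Q) - card (P \<inter> Q)"
  proof -
    have "finite (P \<inter> Q)" "P \<inter> Q \<subseteq> P \<union> Q" using assms by auto
    from card_Diff_subset[OF this] show ?thesis by (simp only: \<open>symd P Q = (P \<union> Q) - (P \<inter> Q)\<close>)
  qed
  moreover have "card (P \<inter> Q) \<le> card (P \<union> Q)" using assms by (intro card_mono) auto
  moreover have "card (P \<union> Q) + card (P \<inter> Q) = card P + card Q"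
    using card_Un_Int[OF assms] by linarith
  ultimately show ?thesis by linarith
qed

lemma par: "(c::nat) + 2 * x = a + b \<Longrightarrow> odd c \<Longrightarrow> odd a \<or> odd b" by presburger

lemma odd_symd:
  assumes "finite A" "finite B" "odd (card (symd A B \<inter> K))"
  shows "odd (card (A \<inter> K)) \<or> odd (card (B \<inter> K))"
proof -
  have e: "symd A B \<inter> K = symd (A \<inter> K) (B \<inter> K)" by (auto simp: symd_def)
  have eq: "card (symd (A \<inter> K) (B \<inter> K)) + 2 * card ((A \<inter> K) \<inter> (B \<inter> K)) = card (A \<inter> K) + card (B \<inter> K)"
    using assms by (intro card_symd) auto
  have o: "odd (card (symd (A \<inter> K) (B \<inter> K)))" using assms(3) e by simp
  show ?thesis by (rule par[OF eq o])
qed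


lemma symd_insert:
  assumes "p \<notin> P" "q \<notin> Q"
  shows "symd (insert p P) (insert q Q) = symd (symd {p} {q}) (symd P Q)"
  using assms unfolding symd_def by auto
locale umx = Metric_space X d for X :: "'x set" and d +
  fixes x0 :: 'x
  assumes ult: "\<And>x y z. \<lbrakk>x\<in>X; y\<in>X; z\<in>X\<rbrakk> \<Longrightarrow> d x z \<le> max (d x y) (d y z)"
    and x0X: "x0 \<in> X"
begin

definition rho where "rho c = max 1 (d c x0)"
definition bl where "bl c r = {y\<in>X. d c y < r}"
definition SS where "SS A = {r. \<exists>c\<in>X. 0 < r \<and> r \<le> rho c \<and> odd (card (A \<inter> bl c r))}"
definition nr where "nr A = Sup (insert 0 (SS A))"

lemma rho_ge1: "1 \<le> rho c" by (simp add: rho_def)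

lemma SS_bound:
  assumes "A \<subseteq> X" "r \<in> SS A" shows "\<exists>a\<in>A. r \<le> rho a"
proof -
  obtain c where c: "c \<in> X" "0 < r" "r \<le> rho c" "odd (card (A \<inter> bl c r))"
    using assms(2) by (auto simp: SS_def)
  then have "A \<inter> bl c r \<noteq> {}" by (metis card.empty even_zero)
  then obtain a where a: "a \<in> A" "a \<in> X" "d c a < r" using assms(1) by (auto simp: bl_def)
  have u1: "d a x0 \<le> max (d a c) (d c x0)" using ult a c x0X by blast
  have u2: "d c x0 \<le> max (d c a) (d a x0)" using ult a c x0X by blast
  have "r \<le> rho a"
  proof (cases "r \<le> 1")
    case True then show ?thesis using rho_ge1[of a] by linarith
  next
    case False
    then have "r \<le> d c x0" using c(3) unfolding rho_def by linarith
    then have "d c x0 \<le> d a x0" using u2 a(3) by linarith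
    then show ?thesis using \<open>r \<le> d c x0\<close> unfolding rho_def by linarith
  qed
  with a show ?thesis by blast
qed

lemma SS_bdd:
  assumes "A \<subseteq> X" "finite A" "r \<in> SS A" shows "r \<le> sum rho A"
proof -
  obtain a where "a \<in> A" "r \<le> rho a" using SS_bound assms by blast
  moreover have "rho a \<le> sum rho A"
    using assms(2) \<open>a \<in> A\<close> by (intro member_le_sum) (auto intro: order_trans[OF zero_le_one rho_ge1])
  ultimately show ?thesis by linarith
qed

lemma nr_ge:
  assumes "A \<subseteq> X" "finite A" "r \<in> SS A" shows "r \<le> nr A"
  unfolding nr_def
proof (rule cSup_upper)
  show "r \<in> insert 0 (SS A)" using assms by simp
  show "bdd_above (insert 0 (SS A))"
    unfolding bdd_above_def
    using SS_bdd[OF assms(1,2)] sum_nonneg[of A rho] order_trans[OF zero_le_one rho_ge1]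
    by (intro exI[of _ "sum rho A"]) force
qed

lemma nr_le:
  assumes "0 \<le> t" "\<And>r. r \<in> SS A \<Longrightarrow> r \<le> t" shows "nr A \<le> t"
  unfolding nr_def using assms by (intro cSup_least) auto

lemma nr_nonneg:
  assumes "A \<subseteq> X" "finite A" shows "0 \<le> nr A"
  unfolding nr_def
proof (rule cSup_upper)
  show "bdd_above (insert 0 (SS A))"
    unfolding bdd_above_def
    using SS_bdd[OF assms(1,2)] sum_nonneg[of A rho] order_trans[OF zero_le_one rho_ge1]
    by (intro exI[of _ "sum rho A"]) force
qed simp

lemma nr_ultra:
  assumes "A \<subseteq> X" "finite A" "B \<subseteq> X" "finite B"
  shows "nr (symd A B) \<le> max (nr A) (nr B)"
proof (rule nr_le)
  show "0 \<le> max (nr A) (nr B)" using nr_nonneg assms by (simp add: le_max_iff_disj)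
  fix r assume "r \<in> SS (symd A B)"
  then obtain c where c: "c \<in> X" "0 < r" "r \<le> rho c" "odd (card (symd A B \<inter> bl c r))"
    by (auto simp: SS_def)
  from odd_symd[OF assms(2,4) c(4)]
  have "r \<in> SS A \<or> r \<in> SS B" unfolding SS_def using c by blast
  then show "r \<le> max (nr A) (nr B)"
  proof
    assume "r \<in> SS A" then have "r \<le> nr A" by (rule nr_ge[OF assms(1,2)])
    then show ?thesis by linarith
  next
    assume "r \<in> SS B" then have "r \<le> nr B" by (rule nr_ge[OF assms(3,4)])
    then show ?thesis by linarith
  qed
qed

lemma nr_empty: "nr {} = 0"
proof -
  have "SS {} = {}" by (auto simp: SS_def)
  then show ?thesis by (simp add: nr_def)
qed


lemma iso_ball:
  assumes "finite A" "A \<subseteq> X" "a \<in> A"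
  shows "\<exists>r>0. r \<le> rho a \<and> A \<inter> bl a r = {a}"
proof -
  define r where "r = Min (insert (rho a) (d a ` (A - {a})))"
  have fin: "finite (insert (rho a) (d a ` (A - {a})))" using assms(1) by simp
  have aX: "a \<in> X" using assms by blast
  have "\<forall>t\<in>insert (rho a) (d a ` (A - {a})). 0 < t"
  proof
    fix t assume "t \<in> insert (rho a) (d a ` (A - {a}))"
    then consider "t = rho a" | "t \<in> d a ` (A - {a})" by blast
    then show "0 < t"
    proof cases
      case 1 then show ?thesis using rho_ge1[of a] by linarith
    next
      case 2
    then obtain b where b: "b \<in> A" "b \<noteq> a" "t = d a b" by blast
    then have "b \<in> X" using assms by blast
    then have "d a b \<noteq> 0" using zero[OF aX] b(2) by metis
    then show "0 < t" using nonneg[of a b] b(3) by linarith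
    qed
  qed
  then have pos: "0 < r" unfolding r_def using Min_gr_iff[OF fin] by blast
  have le: "r \<le> rho a" unfolding r_def using fin by (intro Min_le) auto
  have "A \<inter> bl a r = {a}"
  proof
    show "{a} \<subseteq> A \<inter> bl a r" using assms aX pos by (simp add: bl_def)
    show "A \<inter> bl a r \<subseteq> {a}"
    proof
      fix b assume b: "b \<in> A \<inter> bl a r"
      show "b \<in> {a}"
      proof (rule ccontr)
        assume "b \<notin> {a}"
        then have "d a b \<in> insert (rho a) (d a ` (A - {a}))" using b by blast
        then have "r \<le> d a b" unfolding r_def using fin by (intro Min_le) auto
        then show False using b by (simp add: bl_def)
      qed
    qed
  qed
  then show ?thesis using pos le by blast
qed

lemma nr_pos:
  assumes "finite A" "A \<subseteq> X" "a \<in> A"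
  shows "\<exists>r>0. r \<le> nr A"
proof -
  obtain r where r: "0 < r" "r \<le> rho a" "A \<inter> bl a r = {a}" using iso_ball[OF assms] by blast
  have "r \<in> SS A" unfolding SS_def using r assms by auto
  then show ?thesis using nr_ge[OF assms(2,1)] r(1) by blast
qed

lemma pair_upper:
  assumes "x \<in> X" "y \<in> X" "x \<noteq> y" "r \<in> SS {x, y}"
  shows "r \<le> d x y"
proof -
  obtain c where c: "c \<in> X" "0 < r" "r \<le> rho c" "odd (card ({x,y} \<inter> bl c r))"
    using assms(4) by (auto simp: SS_def)
  have one: "x \<in> bl c r \<and> y \<notin> bl c r \<or> y \<in> bl c r \<and> x \<notin> bl c r"
  proof (rule ccontr)
    assume "\<not> ?thesis"
    then have "{x,y} \<inter> bl c r = {} \<or> {x,y} \<inter> bl c r = {x,y}" by blast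
    then show False using c(4) assms(3) by auto
  qed
  have u1: "d c y \<le> max (d c x) (d x y)" using ult c(1) assms(1,2) by blast
  have u2: "d c x \<le> max (d c y) (d y x)" using ult c(1) assms(1,2) by blast
  show ?thesis
    using one u1 u2 commute[of x y] assms(1,2) unfolding bl_def by (auto simp: max_def split: if_splits)
qed

lemma pair_lower:
  assumes "x \<in> X" "y \<in> X" "x \<noteq> y" "d y x0 \<le> d x x0"
  shows "d x y \<in> SS {x, y}"
proof -
  have u: "d x y \<le> max (d x x0) (d x0 y)" using ult assms(1,2) x0X by blast
  have "d x y \<le> rho x" using u assms(4) commute[of x0 y] unfolding rho_def by linarith
  moreover have "0 < d x y" using zero[OF assms(1,2)] assms(3) nonneg[of x y] by linarith
  moreover have "{x, y} \<inter> bl x (d x y) = {x}" using assms(1,3) \<open>0 < d x y\<close> by (auto simp: bl_def)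
  ultimately show ?thesis unfolding SS_def using assms(1) by auto
qed

lemma nr_pair:
  assumes "x \<in> X" "y \<in> X"
  shows "nr (symd {x} {y}) = d x y"
proof (cases "x = y")
  case True
  then show ?thesis using nr_empty assms by (simp add: symd_def)
next
  case False
  then have e: "symd {x} {y} = {x, y}" by (auto simp: symd_def)
  have fin: "finite {x,y}" "{x,y} \<subseteq> X" using assms by auto
  have "nr {x,y} \<le> d x y"
    by (rule nr_le) (use pair_upper[OF assms False] in auto)
  moreover have "d x y \<le> nr {x,y}"
  proof (cases "d y x0 \<le> d x x0")
    case True
    show ?thesis by (rule nr_ge[OF fin(2,1) pair_lower[OF assms False True]])
  next
    case F: False
    have "d y x \<in> SS {y, x}" using pair_lower[OF assms(2,1)] False F by auto
    then have "d y x \<le> nr {x,y}" using nr_ge[OF fin(2,1)] by (simp add: insert_commute)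
    then show ?thesis using commute[of x y] by simp
  qed
  ultimately show ?thesis using e by simp
qed

lemma nr_image:
  assumes "finite A" "A \<subseteq> X" "inj_on f A" "inj_on h A" "f ` A \<subseteq> X" "h ` A \<subseteq> X"
    "\<And>a. a \<in> A \<Longrightarrow> d (f a) (h a) \<le> t" "0 \<le> t"
  shows "nr (symd (f ` A) (h ` A)) \<le> t"
  using assms
proof (induction A rule: finite_induct)
  case empty
  then show ?case using nr_empty by (simp add: symd_def)
next
  case (insert a A)
  have fa: "f a \<notin> f ` A" using insert(1,2,5) by auto
  have ha: "h a \<notin> h ` A" using insert(1,2,6) by auto
  have e: "symd (f ` insert a A) (h ` insert a A) = symd (symd {f a} {h a}) (symd (f ` A) (h ` A))"
    using symd_insert[OF fa ha] by simp
  have X1: "f a \<in> X" "h a \<in> X" using insert by auto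
  have IH: "nr (symd (f ` A) (h ` A)) \<le> t"
    using insert by (intro insert.IH) (auto intro: inj_on_subset)
  have P1: "nr (symd {f a} {h a}) \<le> t" using nr_pair[OF X1] insert(9) by simp
  have fin1: "finite (symd {f a} {h a})" "symd {f a} {h a} \<subseteq> X" using X1 by (auto simp: symd_def)
  have fin2: "finite (symd (f ` A) (h ` A))" "symd (f ` A) (h ` A) \<subseteq> X"
    using insert by (auto simp: symd_def)
  have "nr (symd (symd {f a} {h a}) (symd (f ` A) (h ` A))) \<le> max (nr (symd {f a} {h a})) (nr (symd (f ` A) (h ` A)))"
    by (rule nr_ultra[OF fin1(2,1) fin2(2,1)])
  then show ?case using e IH P1 by simp
qed

lemma odd_class:
  assumes "finite Q" "Q \<subseteq> C" "C \<subseteq> X" "0 < \<delta>"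
    "\<And>y z. y \<in> Q \<Longrightarrow> z \<in> C \<Longrightarrow> d y z < \<delta> \<Longrightarrow> z \<in> Q" "odd (card Q)"
  shows "\<exists>y\<in>Q. odd (card (C \<inter> bl y \<delta>))"
  using assms
proof (induction "card Q" arbitrary: Q rule: less_induct)
  case less
  have "Q \<noteq> {}" using less.prems(6) by (metis card.empty even_zero)
  then obtain y where y: "y \<in> Q" by blast
  have yX: "y \<in> X" using y less.prems by blast
  define K where "K = C \<inter> bl y \<delta>"
  show ?case
  proof (cases "odd (card K)")
    case True then show ?thesis using y K_def by blast
  next
    case False
    have KQ: "K \<subseteq> Q" unfolding K_def bl_def using less.prems(5)[OF y] by blast
    have yK: "y \<in> K" unfolding K_def bl_def using y yX less.prems(2,4) by auto
    have finK: "finite K" using KQ less.prems(1) finite_subset by blast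
    have cQ: "card (Q - K) = card Q - card K" using card_Diff_subset[OF finK KQ] .
    have cK: "card K \<le> card Q" using card_mono[OF less.prems(1) KQ] .
    have cK1: "0 < card K" using finK yK card_gt_0_iff by blast
    have lt: "card (Q - K) < card Q" using cQ cK cK1 by linarith
    have odd': "odd (card (Q - K))" using cQ cK False less.prems(6) by (simp add: even_diff_nat)
    have clos: "z \<in> Q - K" if a: "y' \<in> Q - K" "z \<in> C" "d y' z < \<delta>" for y' z
    proof -
      have zQ: "z \<in> Q" using less.prems(5) a by blast
      have y'X: "y' \<in> X" "z \<in> X" using a less.prems(2,3) by blast+
      have "z \<notin> K"
      proof
        assume "z \<in> K"
        then have "d y z < \<delta>" unfolding K_def bl_def by blast
        moreover have "d y y' \<le> max (d y z) (d z y')" using ult yX y'X by blast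
        ultimately have "d y y' < \<delta>" using a(3) commute[of y' z] by linarith
        then have "y' \<in> K" unfolding K_def bl_def using a less.prems(2) y'X by blast
        then show False using a by blast
      qed
      then show ?thesis using zQ by blast
    qed
    have "\<exists>y\<in>Q - K. odd (card (C \<inter> bl y \<delta>))"
    proof -
      have f': "finite (Q - K)" using less.prems(1) by simp
      have s': "Q - K \<subseteq> C" using less.prems(2) by blast
      show ?thesis by (rule less.hyps[OF lt f' s' less.prems(3) less.prems(4) clos odd'])
    qed
    then show ?thesis by blast
  qed
qed

lemma nr_map_small:
  assumes inj: "inj_on f X" and fX: "f ` X \<subseteq> X"
    and unif: "\<And>x y. x \<in> X \<Longrightarrow> y \<in> X \<Longrightarrow> d x y < \<delta> \<Longrightarrow> d (f x) (f y) < \<epsilon>"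
    and dpos: "0 < \<delta>" "\<delta> \<le> 1" and epos: "0 \<le> \<epsilon>"
    and C: "finite C" "C \<subseteq> X" and small: "nr C < \<delta>"
  shows "nr (f ` C) \<le> \<epsilon>"
proof (rule nr_le[OF epos])
  fix r assume "r \<in> SS (f ` C)"
  then obtain c where c: "c \<in> X" "0 < r" "r \<le> rho c" "odd (card (f ` C \<inter> bl c r))"
    by (auto simp: SS_def)
  show "r \<le> \<epsilon>"
  proof (rule ccontr)
    assume "\<not> r \<le> \<epsilon>"
    then have rgt: "\<epsilon> < r" by simp
    define Q where "Q = {y \<in> C. f y \<in> bl c r}"
    have QX: "Q \<subseteq> X" using C(2) unfolding Q_def by blast
    have injC: "inj_on f Q" using inj_on_subset[OF inj QX] .
    have "f ` Q = f ` C \<inter> bl c r"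
    proof
      show "f ` Q \<subseteq> f ` C \<inter> bl c r" unfolding Q_def by blast
      show "f ` C \<inter> bl c r \<subseteq> f ` Q" unfolding Q_def by blast
    qed
    then have "card Q = card (f ` C \<inter> bl c r)" using card_image[OF injC] by simp
    then have oQ: "odd (card Q)" using c(4) by simp
    have finQ: "finite Q" using C(1) unfolding Q_def by simp
    have QC: "Q \<subseteq> C" unfolding Q_def by blast
    have clos: "z \<in> Q" if a: "y \<in> Q" "z \<in> C" "d y z < \<delta>" for y z
    proof -
      have yz: "y \<in> X" "z \<in> X" using a C(2) QC by blast+
      have fyz: "f y \<in> X" "f z \<in> X" using yz fX by blast+
      have "d (f y) (f z) < \<epsilon>" using unif[OF yz a(3)] .
      moreover have "d c (f y) < r" using a(1) unfolding Q_def bl_def by blast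
      moreover have "d c (f z) \<le> max (d c (f y)) (d (f y) (f z))" using ult c(1) fyz by blast
      ultimately have "d c (f z) < r" using rgt by linarith
      then show ?thesis unfolding Q_def bl_def using a(2) fyz(2) by simp
    qed
    have "\<exists>y\<in>Q. odd (card (C \<inter> bl y \<delta>))"
      by (rule odd_class[OF finQ QC C(2) dpos(1) clos oQ])
    then obtain y where y: "y \<in> Q" "odd (card (C \<inter> bl y \<delta>))" by (rule bexE)
    have yX: "y \<in> X" using y QC C(2) by blast
    have dr: "\<delta> \<le> rho y" using dpos(2) rho_ge1[of y] by linarith
    have ex: "\<exists>c\<in>X. 0 < \<delta> \<and> \<delta> \<le> rho c \<and> odd (card (C \<inter> bl c \<delta>))"
    proof (rule bexI[of _ y])
      show "0 < \<delta> \<and> \<delta> \<le> rho y \<and> odd (card (C \<inter> bl y \<delta>))" using dpos(1) dr y(2) by blast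
      show "y \<in> X" by (rule yX)
    qed
    have "\<delta> \<in> SS C" unfolding SS_def using ex by (rule CollectI)
    then have "\<delta> \<le> nr C" using nr_ge[OF C(2,1)] by blast
    then show False using small by linarith
  qed
qed
end



definition rr :: "'x set \<Rightarrow> 'x set \<Rightarrow> 'x set" where
  "rr X A = (if finite A \<and> A \<subseteq> X then A else {})"

definition EE :: "'x set \<Rightarrow> 'x set monoid" where
  "EE X = \<lparr>carrier = {A. finite A \<and> A \<subseteq> X}, mult = (\<lambda>A B. symd (rr X A) (rr X B)), one = {}\<rparr>"

lemma EE_carrier: "carrier (EE X) = {A. finite A \<and> A \<subseteq> X}" by (simp add: EE_def)
lemma EE_one: "\<one>\<^bsub>EE X\<^esub> = {}" by (simp add: EE_def)
lemma EE_mult: "A \<in> carrier (EE X) \<Longrightarrow> B \<in> carrier (EE X) \<Longrightarrow> A \<otimes>\<^bsub>EE X\<^esub> B = symd A B"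
  by (simp add: EE_def rr_def)
lemma EE_mult_gen: "A \<otimes>\<^bsub>EE X\<^esub> B = symd (rr X A) (rr X B)"
  by (simp add: EE_def)
lemma rr_empty: "rr X {} = {}" by (simp add: rr_def)
lemma rr_carrier: "rr X A \<in> carrier (EE X)" by (simp add: EE_carrier rr_def)
lemma rr_id: "A \<in> carrier (EE X) \<Longrightarrow> rr X A = A" by (simp add: EE_carrier rr_def)

lemma symd_carrier: "A \<in> carrier (EE X) \<Longrightarrow> B \<in> carrier (EE X) \<Longrightarrow> symd A B \<in> carrier (EE X)"
  by (auto simp: EE_carrier symd_def)

lemma symd_assoc: "symd (symd A B) C = symd A (symd B C)" by (auto simp: symd_def)
lemma symd_comm: "symd A B = symd B A" by (auto simp: symd_def)
lemma symd_self: "symd A A = {}" by (auto simp: symd_def)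
lemma symd_empty: "symd {} A = A" by (auto simp: symd_def)
lemma symd_eq_empty: "symd A B = {} \<longleftrightarrow> A = B" by (auto simp: symd_def)

lemma EE_comm_group: "comm_group (EE X)"
proof (rule comm_groupI)
  fix x y z assume c: "x \<in> carrier (EE X)" "y \<in> carrier (EE X)" "z \<in> carrier (EE X)"
  show "x \<otimes>\<^bsub>EE X\<^esub> y \<otimes>\<^bsub>EE X\<^esub> z = x \<otimes>\<^bsub>EE X\<^esub> (y \<otimes>\<^bsub>EE X\<^esub> z)"
    using c by (simp add: EE_mult symd_carrier symd_assoc)
next
  fix x y assume c: "x \<in> carrier (EE X)" "y \<in> carrier (EE X)"
  show "x \<otimes>\<^bsub>EE X\<^esub> y \<in> carrier (EE X)" using c by (simp add: EE_mult symd_carrier)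
  show "x \<otimes>\<^bsub>EE X\<^esub> y = y \<otimes>\<^bsub>EE X\<^esub> x" using c by (simp add: EE_mult symd_comm)
next
  show "\<one>\<^bsub>EE X\<^esub> \<in> carrier (EE X)" by (simp add: EE_one EE_carrier)
next
  fix x assume c: "x \<in> carrier (EE X)"
  show "\<one>\<^bsub>EE X\<^esub> \<otimes>\<^bsub>EE X\<^esub> x = x"
    using c by (simp add: EE_one EE_carrier EE_mult symd_empty)
  show "\<exists>y\<in>carrier (EE X). y \<otimes>\<^bsub>EE X\<^esub> x = \<one>\<^bsub>EE X\<^esub>"
    using c by (intro bexI[of _ x]) (simp_all add: EE_mult EE_one symd_self)
qed

lemma EE_group: "group (EE X)" using EE_comm_group comm_group.axioms(2) by blast

lemma EE_inv_carrier: "A \<in> carrier (EE X) \<Longrightarrow> inv\<^bsub>EE X\<^esub> A = A"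
  by (rule group.inv_equality[OF EE_group]) (simp_all add: EE_mult EE_one symd_self)

lemma EE_inv_gen: "inv\<^bsub>EE X\<^esub> A = rr X A"
proof (cases "A \<in> carrier (EE X)")
  case True then show ?thesis by (simp add: EE_inv_carrier rr_id)
next
  case False
  then have r: "rr X A = {}" by (auto simp: rr_def EE_carrier)
  have "(THE y. y \<in> carrier (EE X) \<and> A \<otimes>\<^bsub>EE X\<^esub> y = \<one>\<^bsub>EE X\<^esub> \<and> y \<otimes>\<^bsub>EE X\<^esub> A = \<one>\<^bsub>EE X\<^esub>) = {}"
  proof (rule the_equality)
    show "{} \<in> carrier (EE X) \<and> A \<otimes>\<^bsub>EE X\<^esub> {} = \<one>\<^bsub>EE X\<^esub> \<and> {} \<otimes>\<^bsub>EE X\<^esub> A = \<one>\<^bsub>EE X\<^esub>"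
    proof -
      have m1: "A \<otimes>\<^bsub>EE X\<^esub> {} = {}" by (simp only: EE_mult_gen r rr_empty symd_self)
      have m2: "{} \<otimes>\<^bsub>EE X\<^esub> A = {}" by (simp only: EE_mult_gen r rr_empty symd_self)
      show ?thesis using m1 m2 by (simp add: EE_one EE_carrier)
    qed
    fix y assume "y \<in> carrier (EE X) \<and> A \<otimes>\<^bsub>EE X\<^esub> y = \<one>\<^bsub>EE X\<^esub> \<and> y \<otimes>\<^bsub>EE X\<^esub> A = \<one>\<^bsub>EE X\<^esub>"
    then have yc: "y \<in> carrier (EE X)" and "symd {} (rr X y) = {}" by (simp_all add: EE_mult_gen r EE_one)
    then show "y = {}" by (simp add: symd_empty rr_id[OF yc])
  qed
  then show ?thesis by (simp add: m_inv_def r)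
qed

lemma EE_boolean: "boolean_group (EE X)"
  unfolding boolean_group_def using EE_comm_group by (simp add: EE_mult EE_one symd_self)

lemma norm_dist_EE: "norm_dist (EE X) nrm A B = nrm (symd (rr X A) (rr X B))"
  unfolding norm_dist_def EE_inv_gen EE_mult_gen
  by (metis rr_carrier rr_id)

lemma norm_dist_EE_carrier:
  "A \<in> carrier (EE X) \<Longrightarrow> B \<in> carrier (EE X) \<Longrightarrow> norm_dist (EE X) nrm A B = nrm (symd A B)"
  by (simp add: norm_dist_EE rr_id)

context umx
begin

lemma nr_zero_iff:
  assumes "A \<in> carrier (EE X)" shows "nr A = 0 \<longleftrightarrow> A = {}"
proof
  assume z: "nr A = 0"
  show "A = {}"
  proof (rule ccontr)
    assume "A \<noteq> {}"
    then obtain a where "a \<in> A" by blast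
    moreover have "finite A" "A \<subseteq> X" using assms by (auto simp: EE_carrier)
    ultimately obtain r where "0 < r" "r \<le> nr A" using nr_pos[of A a] by blast
    then show False using z by linarith
  qed
qed (simp add: nr_empty)

lemma EE_ultranorm: "ultranorm (EE X) nr"
  unfolding ultranorm_def
proof (intro conjI ballI)
  fix u assume u: "u \<in> carrier (EE X)"
  show "0 \<le> nr u" using u nr_nonneg by (simp add: EE_carrier)
  show "nr u = 0 \<longleftrightarrow> u = \<one>\<^bsub>EE X\<^esub>" using nr_zero_iff[OF u] by (simp add: EE_one)
  show "nr (inv\<^bsub>EE X\<^esub> u) = nr u" using u by (simp add: EE_inv_carrier)
next
  fix u v assume u: "u \<in> carrier (EE X)" and v: "v \<in> carrier (EE X)"
  show "nr (u \<otimes>\<^bsub>EE X\<^esub> v) \<le> max (nr u) (nr v)"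
    using u v nr_ultra by (simp add: EE_mult EE_carrier)
qed

lemma EE_metric: "Metric_space (carrier (EE X)) (norm_dist (EE X) nr)"
proof
  fix x y
  show "0 \<le> norm_dist (EE X) nr x y"
  proof -
    have "symd (rr X x) (rr X y) \<in> carrier (EE X)" by (rule symd_carrier[OF rr_carrier rr_carrier])
    then have "0 \<le> nr (symd (rr X x) (rr X y))" using nr_nonneg by (simp add: EE_carrier)
    then show ?thesis unfolding norm_dist_EE .
  qed
  show "norm_dist (EE X) nr x y = norm_dist (EE X) nr y x"
    unfolding norm_dist_EE by (simp add: symd_comm)
next
  fix x y assume c: "x \<in> carrier (EE X)" "y \<in> carrier (EE X)"
  show "(norm_dist (EE X) nr x y = 0) = (x = y)"
    using c nr_zero_iff[OF symd_carrier[OF c]] by (simp add: norm_dist_EE_carrier symd_eq_empty)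
next
  fix x y z assume c: "x \<in> carrier (EE X)" "y \<in> carrier (EE X)" "z \<in> carrier (EE X)"
  have e: "symd x z = symd (symd x y) (symd y z)"
    by (simp add: symd_assoc) (simp add: symd_assoc[symmetric] symd_self symd_empty)
  have "nr (symd x z) \<le> max (nr (symd x y)) (nr (symd y z))"
    unfolding e using symd_carrier[OF c(1,2)] symd_carrier[OF c(2,3)]
    by (intro nr_ultra) (simp_all add: EE_carrier)
  moreover have "0 \<le> nr (symd x y)" "0 \<le> nr (symd y z)"
    using symd_carrier[OF c(1,2)] symd_carrier[OF c(2,3)] nr_nonneg by (simp_all add: EE_carrier)
  ultimately show "norm_dist (EE X) nr x z \<le> norm_dist (EE X) nr x y + norm_dist (EE X) nr y z"
    using c by (simp add: norm_dist_EE_carrier)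
qed

lemma nr_single_ge: "x \<in> X \<Longrightarrow> 1 \<le> nr {x}"
proof -
  assume x: "x \<in> X"
  have "{x} \<inter> bl x (rho x) = {x}" using x rho_ge1[of x] by (auto simp: bl_def)
  then have "rho x \<in> SS {x}" unfolding SS_def using x rho_ge1[of x] by auto
  then have "rho x \<le> nr {x}" using nr_ge[of "{x}"] x by simp
  then show ?thesis using rho_ge1[of x] by linarith
qed

lemma closed_key:
  assumes "finite A" "A \<subseteq> X" "\<And>x. A \<noteq> {x}"
  shows "\<exists>r>0. \<forall>x\<in>X. r \<le> nr (symd A {x})"
proof (cases "A = {}")
  case True
  show ?thesis using nr_single_ge True by (intro exI[of _ 1]) (simp add: symd_comm symd_empty)
next
  case False
  then obtain a where a: "a \<in> A" by blast
  then obtain a' where a': "a' \<in> A" "a' \<noteq> a" using assms(3)[of a] by blast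
  obtain r1 where r1: "0 < r1" "r1 \<le> rho a" "A \<inter> bl a r1 = {a}" using iso_ball[OF assms(1,2) a] by blast
  obtain r2 where r2: "0 < r2" "r2 \<le> rho a'" "A \<inter> bl a' r2 = {a'}" using iso_ball[OF assms(1,2) a'(1)] by blast
  have aX: "a \<in> X" "a' \<in> X" using a a' assms(2) by blast+
  have d1: "r1 \<le> d a a'"
  proof (rule ccontr)
    assume "\<not> r1 \<le> d a a'"
    then have "a' \<in> A \<inter> bl a r1" using a' aX by (simp add: bl_def)
    then have "a' \<in> {a}" using r1(3) by simp
    then show False using a'(2) by simp
  qed
  have d2: "r2 \<le> d a' a"
  proof (rule ccontr)
    assume "\<not> r2 \<le> d a' a"
    then have "a \<in> A \<inter> bl a' r2" using a aX by (simp add: bl_def)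
    then have "a \<in> {a'}" using r2(3) by simp
    then show False using a'(2) by simp
  qed
  have gen: "r \<le> nr (symd A {x})" if "0 < r" "r \<le> rho b" "A \<inter> bl b r = {b}" "b \<in> A" "x \<in> X" "x \<notin> bl b r" for r b x
  proof -
    have bX: "b \<in> X" using that(4) assms(2) by blast
    have "symd A {x} \<inter> bl b r = {b}"
    proof -
      have "b \<in> bl b r" using that(3) by blast
      then have "b \<noteq> x" using that(6) by blast
      then show ?thesis using that(3,6) unfolding symd_def by blast
    qed
    then have "r \<in> SS (symd A {x})" unfolding SS_def using that bX by auto
    moreover have "symd A {x} \<subseteq> X" "finite (symd A {x})" using assms(1,2) that(5) by (auto simp: symd_def)
    ultimately show ?thesis using nr_ge[of "symd A {x}"] by blast
  qed
  show ?thesis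
  proof (intro exI[of _ "min r1 r2"] conjI ballI)
    show "0 < min r1 r2" using r1 r2 by simp
    fix x assume x: "x \<in> X"
    have "x \<notin> bl a r1 \<or> x \<notin> bl a' r2"
    proof (rule ccontr)
      assume "\<not> ?thesis"
      then have "d a x < r1" "d a' x < r2" by (auto simp: bl_def)
      moreover have "d a a' \<le> max (d a x) (d x a')" using ult aX x by blast
      ultimately show False using d1 d2 commute[of a a'] commute[of x a'] by (simp add: max_def split: if_splits)
    qed
    then show "min r1 r2 \<le> nr (symd A {x})"
    proof
      assume "x \<notin> bl a r1"
      from gen[OF r1 a x this] show ?thesis by linarith
    next
      assume "x \<notin> bl a' r2"
      from gen[OF r2 a'(1) x this] show ?thesis by linarith
    qed
  qed
qed

end



lemma fin_nbhd:
  assumes "finite S" "g0 \<in> topspace T" "\<forall>a\<in>S. \<exists>U. openin T U \<and> g0 \<in> U \<and> (\<forall>g\<in>U. P a g)"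
  shows "\<exists>U. openin T U \<and> g0 \<in> U \<and> (\<forall>g\<in>U. \<forall>a\<in>S. P a g)"
  using assms
proof (induction S rule: finite_induct)
  case empty
  show ?case by (intro exI[of _ "topspace T"]) (simp add: empty.prems(1))
next
  case (insert a S)
  obtain U1 where U1: "openin T U1" "g0 \<in> U1" "\<forall>g\<in>U1. \<forall>a\<in>S. P a g"
    using insert.IH insert.prems by blast
  obtain U2 where U2: "openin T U2" "g0 \<in> U2" "\<forall>g\<in>U2. P a g"
    using insert.prems(2) by blast
  show ?case
    by (intro exI[of _ "U1 \<inter> U2"]) (use U1 U2 in auto)
qed

lemma act_props:
  assumes G: "group G" and act: "is_action G X \<pi>" and g: "g \<in> carrier G"
  shows "\<pi> g ` X \<subseteq> X" "\<And>x. x \<in> X \<Longrightarrow> \<pi> (inv\<^bsub>G\<^esub> g) (\<pi> g x) = x"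
    "\<And>x. x \<in> X \<Longrightarrow> \<pi> g (\<pi> (inv\<^bsub>G\<^esub> g) x) = x" "inj_on (\<pi> g) X"
proof -
  have A1: "\<forall>g\<in>carrier G. \<forall>x\<in>X. \<pi> g x \<in> X" and A2: "\<forall>x\<in>X. \<pi> \<one>\<^bsub>G\<^esub> x = x"
    and A3: "\<forall>g\<in>carrier G. \<forall>h\<in>carrier G. \<forall>x\<in>X. \<pi> (g \<otimes>\<^bsub>G\<^esub> h) x = \<pi> g (\<pi> h x)"
    using act unfolding is_action_def by blast+
  have ig: "inv\<^bsub>G\<^esub> g \<in> carrier G" using group.inv_closed[OF G g] .
  show "\<pi> g ` X \<subseteq> X" using A1 g by blast
  show l: "\<pi> (inv\<^bsub>G\<^esub> g) (\<pi> g x) = x" if "x \<in> X" for x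
  proof -
    have "\<pi> (inv\<^bsub>G\<^esub> g) (\<pi> g x) = \<pi> (inv\<^bsub>G\<^esub> g \<otimes>\<^bsub>G\<^esub> g) x" using A3 ig g that by simp
    also have "\<dots> = x" using group.l_inv[OF G g] A2 that by simp
    finally show ?thesis .
  qed
  show "\<pi> g (\<pi> (inv\<^bsub>G\<^esub> g) x) = x" if "x \<in> X" for x
  proof -
    have "\<pi> g (\<pi> (inv\<^bsub>G\<^esub> g) x) = \<pi> (g \<otimes>\<^bsub>G\<^esub> inv\<^bsub>G\<^esub> g) x" using A3 ig g that by simp
    also have "\<dots> = x" using group.r_inv[OF G g] A2 that by simp
    finally show ?thesis .
  qed
  show "inj_on (\<pi> g) X"
    by (rule inj_on_inverseI[of X "\<pi> (inv\<^bsub>G\<^esub> g)"]) (rule l)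
qed

context umx
begin

lemma cont_key:
  assumes G: "group G" and top: "topspace T = carrier G" and act: "is_action G X \<pi>"
    and cont: "continuous_map (prod_topology T mtopology) mtopology (\<lambda>(g, x). \<pi> g x)"
    and pu: "pi_uniform G T X d \<pi>"
    and g0: "g0 \<in> carrier G" and A0: "finite A0" "A0 \<subseteq> X" and e: "0 < \<epsilon>"
  shows "\<exists>W \<delta>. openin T W \<and> g0 \<in> W \<and> 0 < \<delta> \<and>
     (\<forall>g\<in>W. \<forall>A. finite A \<and> A \<subseteq> X \<and> nr (symd A0 A) < \<delta> \<longrightarrow> nr (symd (\<pi> g0 ` A0) (\<pi> g ` A)) < \<epsilon>)"
proof -
  have e2: "0 < \<epsilon> / 2" using e by simp
  obtain \<delta>' U1 where U1: "0 < \<delta>'" "openin T U1" "g0 \<in> U1"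
    "\<And>g x y. g \<in> U1 \<Longrightarrow> x \<in> X \<Longrightarrow> y \<in> X \<Longrightarrow> d x y < \<delta>' \<Longrightarrow> d (\<pi> g x) (\<pi> g y) < \<epsilon> / 2"
    using pu e2 g0 unfolding pi_uniform_def by meson
  have pt: "\<exists>U. openin T U \<and> g0 \<in> U \<and> (\<forall>g\<in>U. d (\<pi> g0 a) (\<pi> g a) < \<epsilon> / 2)" if a: "a \<in> X" for a
  proof -
    have c1: "continuous_map T (prod_topology T mtopology) (\<lambda>g. (id g, a))"
      by (rule continuous_map_pairedI[OF continuous_map_id]) (simp add: a)
    have c2: "continuous_map T mtopology ((\<lambda>(g, x). \<pi> g x) \<circ> (\<lambda>g. (id g, a)))"
      by (rule continuous_map_compose[OF c1 cont])
    have c3: "continuous_map T mtopology (\<lambda>g. \<pi> g a)" using c2 by (simp add: o_def)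
    have pa: "\<pi> g0 a \<in> X" using act_props(1)[OF G act g0] a by blast
    have op: "openin T {g \<in> topspace T. \<pi> g a \<in> mball (\<pi> g0 a) (\<epsilon>/2)}"
      using c3 unfolding continuous_map by blast
    show ?thesis
    proof (intro exI[of _ "{g \<in> topspace T. \<pi> g a \<in> mball (\<pi> g0 a) (\<epsilon>/2)}"] conjI ballI op)
      show "g0 \<in> {g \<in> topspace T. \<pi> g a \<in> mball (\<pi> g0 a) (\<epsilon> / 2)}" using g0 top pa e2 by simp
      fix g assume "g \<in> {g \<in> topspace T. \<pi> g a \<in> mball (\<pi> g0 a) (\<epsilon> / 2)}"
      then show "d (\<pi> g0 a) (\<pi> g a) < \<epsilon> / 2" by simp
    qed
  qed
  obtain U2 where U2: "openin T U2" "g0 \<in> U2" "\<forall>g\<in>U2. \<forall>a\<in>A0. d (\<pi> g0 a) (\<pi> g a) < \<epsilon> / 2"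
    using fin_nbhd[OF A0(1), of g0 T "\<lambda>a g. d (\<pi> g0 a) (\<pi> g a) < \<epsilon> / 2"] pt A0(2) g0 top by blast
  define \<delta> where "\<delta> = min \<delta>' 1"
  have dpos: "0 < \<delta>" "\<delta> \<le> 1" "\<delta> \<le> \<delta>'" using U1(1) by (auto simp: \<delta>_def)
  show ?thesis
  proof (intro exI[of _ "U1 \<inter> U2"] exI[of _ \<delta>] conjI ballI allI impI)
    show "openin T (U1 \<inter> U2)" using U1 U2 by blast
    show "g0 \<in> U1 \<inter> U2" using U1 U2 by blast
    show "0 < \<delta>" by (rule dpos(1))
    fix g A assume gW: "g \<in> U1 \<inter> U2" and A: "finite A \<and> A \<subseteq> X \<and> nr (symd A0 A) < \<delta>"
    have gG: "g \<in> carrier G" using gW openin_subset[OF U1(2)] top by blast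
    note pg = act_props[OF G act gG] and pg0 = act_props[OF G act g0]
    have C: "finite (symd A0 A)" "symd A0 A \<subseteq> X" using A A0 by (auto simp: symd_def)
    have s1: "nr (\<pi> g ` symd A0 A) \<le> \<epsilon> / 2"
    proof (rule nr_map_small[OF pg(4) pg(1) _ dpos(1,2) _ C])
      fix x y assume "x \<in> X" "y \<in> X" "d x y < \<delta>"
      then show "d (\<pi> g x) (\<pi> g y) < \<epsilon> / 2" using U1(4)[of g x y] gW dpos(3) by simp
    next
      show "0 \<le> \<epsilon> / 2" using e2 by simp
      show "nr (symd A0 A) < \<delta>" using A by simp
    qed
    have img: "\<pi> g ` symd A0 A = symd (\<pi> g ` A0) (\<pi> g ` A)"
    proof -
      have "\<pi> g ` (A0 - A) = \<pi> g ` A0 - \<pi> g ` A" by (rule inj_on_image_set_diff[OF pg(4)]) (use A A0 in auto)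
      moreover have "\<pi> g ` (A - A0) = \<pi> g ` A - \<pi> g ` A0" by (rule inj_on_image_set_diff[OF pg(4)]) (use A A0 in auto)
      ultimately show ?thesis unfolding symd_def by (simp add: image_Un)
    qed
    have s2: "nr (symd (\<pi> g0 ` A0) (\<pi> g ` A0)) \<le> \<epsilon> / 2"
    proof (rule nr_image[OF A0])
      show "inj_on (\<pi> g0) A0" using inj_on_subset[OF pg0(4) A0(2)] .
      show "inj_on (\<pi> g) A0" using inj_on_subset[OF pg(4) A0(2)] .
      show "\<pi> g0 ` A0 \<subseteq> X" using pg0(1) A0(2) by blast
      show "\<pi> g ` A0 \<subseteq> X" using pg(1) A0(2) by blast
      show "0 \<le> \<epsilon> / 2" using e2 by simp
      fix a assume "a \<in> A0"
      then show "d (\<pi> g0 a) (\<pi> g a) \<le> \<epsilon> / 2" using U2(3) gW by fastforce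
    qed
    have eq: "symd (\<pi> g0 ` A0) (\<pi> g ` A) = symd (symd (\<pi> g0 ` A0) (\<pi> g ` A0)) (symd (\<pi> g ` A0) (\<pi> g ` A))"
      by (simp add: symd_assoc) (simp add: symd_assoc[symmetric] symd_self symd_empty)
    have F1: "finite (symd (\<pi> g0 ` A0) (\<pi> g ` A0))" "symd (\<pi> g0 ` A0) (\<pi> g ` A0) \<subseteq> X"
      using A0 pg(1) pg0(1) by (auto simp: symd_def)
    have F2: "finite (symd (\<pi> g ` A0) (\<pi> g ` A))" "symd (\<pi> g ` A0) (\<pi> g ` A) \<subseteq> X"
      using A0 A pg(1) by (auto simp: symd_def)
    have "nr (symd (\<pi> g0 ` A0) (\<pi> g ` A)) \<le> max (nr (symd (\<pi> g0 ` A0) (\<pi> g ` A0))) (nr (symd (\<pi> g ` A0) (\<pi> g ` A)))"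
      unfolding eq by (rule nr_ultra[OF F1(2,1) F2(2,1)])
    then show "nr (symd (\<pi> g0 ` A0) (\<pi> g ` A)) < \<epsilon>"
      using s1 s2 img e by simp
  qed
qed

end



lemma img_symd:
  assumes "inj_on f X" "A \<subseteq> X" "B \<subseteq> X"
  shows "f ` symd A B = symd (f ` A) (f ` B)"
proof -
  have "f ` (A - B) = f ` A - f ` B" by (rule inj_on_image_set_diff[OF assms(1)]) (use assms in auto)
  moreover have "f ` (B - A) = f ` B - f ` A" by (rule inj_on_image_set_diff[OF assms(1)]) (use assms in auto)
  ultimately show ?thesis unfolding symd_def by (simp add: image_Un)
qed

theorem theorem6p5:
  fixes G :: "('g, 'b) monoid_scheme" and T :: "'g topology"
    and X :: "'x set" and d :: "'x \<Rightarrow> 'x \<Rightarrow> real"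
    and \<pi> :: "'g \<Rightarrow> 'x \<Rightarrow> 'x" and x0 :: 'x
  assumes "ultrametric X d"
    and "topological_group G T"
    and "is_action G X \<pi>"
    and "continuous_map (prod_topology T (Metric_space.mtopology X d))
           (Metric_space.mtopology X d) (\<lambda>(g, x). \<pi> g x)"
    and "pi_uniform G T X d \<pi>"
    and "x0 \<in> X"
    and "Metric_space.mbounded X d {\<pi> g x0 | g. g \<in> carrier G}"
  shows "\<exists>(E :: 'x set monoid) nrm \<sigma> \<alpha>.
           boolean_group E \<and> ultranorm E nrm \<and>
           is_action G (carrier E) \<sigma> \<and>
           (\<forall>g\<in>carrier G. \<sigma> g \<in> iso E E) \<and>
           continuous_map (prod_topology T (Metric_space.mtopology (carrier E) (norm_dist E nrm)))
             (Metric_space.mtopology (carrier E) (norm_dist E nrm)) (\<lambda>(g, u). \<sigma> g u) \<and>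
           \<alpha> ` X \<subseteq> carrier E \<and>
           (\<forall>x\<in>X. \<forall>y\<in>X. norm_dist E nrm (\<alpha> x) (\<alpha> y) = d x y) \<and>
           (\<forall>g\<in>carrier G. \<forall>x\<in>X. \<alpha> (\<pi> g x) = \<sigma> g (\<alpha> x)) \<and>
           closedin (Metric_space.mtopology (carrier E) (norm_dist E nrm)) (\<alpha> ` X)"
proof -
  have MS: "Metric_space X d" and ultX: "\<forall>x\<in>X. \<forall>y\<in>X. \<forall>z\<in>X. d x z \<le> max (d x y) (d y z)"
    using assms(1) unfolding ultrametric_def by blast+
  interpret U: umx X d x0
    by (rule umx.intro[OF MS], rule umx_axioms.intro) (use ultX assms(6) in auto)
  have G: "group G" and top: "topspace T = carrier G"
    using assms(2) unfolding topological_group_def by blast+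
  interpret ME: Metric_space "carrier (EE X)" "norm_dist (EE X) U.nr" by (rule U.EE_metric)
  define \<sigma> where "\<sigma> = (\<lambda>g (A::'x set). \<pi> g ` A)"
  have A2: "\<forall>x\<in>X. \<pi> \<one>\<^bsub>G\<^esub> x = x"
    and A3: "\<forall>g\<in>carrier G. \<forall>h\<in>carrier G. \<forall>x\<in>X. \<pi> (g \<otimes>\<^bsub>G\<^esub> h) x = \<pi> g (\<pi> h x)"
    using assms(3) unfolding is_action_def by blast+
  have sc: "\<sigma> g A \<in> carrier (EE X)" if "g \<in> carrier G" "A \<in> carrier (EE X)" for g A
    using that act_props(1)[OF G assms(3) that(1)] unfolding \<sigma>_def EE_carrier by auto
  have actE: "is_action G (carrier (EE X)) \<sigma>"
    unfolding is_action_def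
  proof (intro conjI ballI)
    fix g A assume "g \<in> carrier G" "A \<in> carrier (EE X)"
    then show "\<sigma> g A \<in> carrier (EE X)" by (rule sc)
  next
    fix A assume A: "A \<in> carrier (EE X)"
    then have "A \<subseteq> X" by (simp add: EE_carrier)
    then have "\<pi> \<one>\<^bsub>G\<^esub> ` A = id ` A" using A2 by (intro image_cong) auto
    then show "\<sigma> \<one>\<^bsub>G\<^esub> A = A" unfolding \<sigma>_def by simp
  next
    fix g h A assume g: "g \<in> carrier G" and h: "h \<in> carrier G" and A: "A \<in> carrier (EE X)"
    then have "A \<subseteq> X" by (simp add: EE_carrier)
    then have "\<pi> (g \<otimes>\<^bsub>G\<^esub> h) ` A = (\<lambda>x. \<pi> g (\<pi> h x)) ` A" using A3 g h by (intro image_cong) auto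
    then show "\<sigma> (g \<otimes>\<^bsub>G\<^esub> h) A = \<sigma> g (\<sigma> h A)" unfolding \<sigma>_def by (simp add: image_image)
  qed
  have isoE: "\<sigma> g \<in> iso (EE X) (EE X)" if g: "g \<in> carrier G" for g
  proof -
    note pg = act_props[OF G assms(3) g]
    have ig: "inv\<^bsub>G\<^esub> g \<in> carrier G" using group.inv_closed[OF G g] .
    have hom: "\<sigma> g \<in> hom (EE X) (EE X)"
      unfolding hom_def
    proof (intro CollectI conjI funcsetI ballI)
      fix A assume "A \<in> carrier (EE X)" then show "\<sigma> g A \<in> carrier (EE X)" by (rule sc[OF g])
    next
      fix A B assume A: "A \<in> carrier (EE X)" and B: "B \<in> carrier (EE X)"
      have "\<sigma> g (symd A B) = symd (\<sigma> g A) (\<sigma> g B)"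
        unfolding \<sigma>_def by (rule img_symd[OF pg(4)]) (use A B in \<open>auto simp: EE_carrier\<close>)
      then show "\<sigma> g (A \<otimes>\<^bsub>EE X\<^esub> B) = \<sigma> g A \<otimes>\<^bsub>EE X\<^esub> \<sigma> g B"
        using A B sc[OF g A] sc[OF g B] by (simp add: EE_mult)
    qed
    have bij: "bij_betw (\<sigma> g) (carrier (EE X)) (carrier (EE X))"
    proof (rule bij_betw_byWitness[where f' = "\<sigma> (inv\<^bsub>G\<^esub> g)"])
      show "\<forall>a\<in>carrier (EE X). \<sigma> (inv\<^bsub>G\<^esub> g) (\<sigma> g a) = a"
      proof
        fix A assume "A \<in> carrier (EE X)"
        then have "A \<subseteq> X" by (simp add: EE_carrier)
        then have "(\<lambda>x. \<pi> (inv\<^bsub>G\<^esub> g) (\<pi> g x)) ` A = id ` A" using pg(2) by (intro image_cong) auto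
        then show "\<sigma> (inv\<^bsub>G\<^esub> g) (\<sigma> g A) = A" unfolding \<sigma>_def by (simp add: image_image)
      qed
      show "\<forall>a\<in>carrier (EE X). \<sigma> g (\<sigma> (inv\<^bsub>G\<^esub> g) a) = a"
      proof
        fix A assume "A \<in> carrier (EE X)"
        then have "A \<subseteq> X" by (simp add: EE_carrier)
        then have "(\<lambda>x. \<pi> g (\<pi> (inv\<^bsub>G\<^esub> g) x)) ` A = id ` A" using pg(3) by (intro image_cong) auto
        then show "\<sigma> g (\<sigma> (inv\<^bsub>G\<^esub> g) A) = A" unfolding \<sigma>_def by (simp add: image_image)
      qed
      show "\<sigma> g ` carrier (EE X) \<subseteq> carrier (EE X)" using sc[OF g] by blast
      show "\<sigma> (inv\<^bsub>G\<^esub> g) ` carrier (EE X) \<subseteq> carrier (EE X)" using sc[OF ig] by blast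
    qed
    show ?thesis unfolding iso_def using hom bij by blast
  qed
  have contE: "continuous_map (prod_topology T ME.mtopology) ME.mtopology (\<lambda>(g, u). \<sigma> g u)"
    unfolding continuous_map
  proof (intro conjI allI impI)
    show "(\<lambda>(g, u). \<sigma> g u) ` topspace (prod_topology T ME.mtopology) \<subseteq> topspace ME.mtopology"
      using sc top by auto
    fix V assume V: "openin ME.mtopology V"
    show "openin (prod_topology T ME.mtopology) {p \<in> topspace (prod_topology T ME.mtopology). (\<lambda>(g, u). \<sigma> g u) p \<in> V}"
    proof (subst openin_subopen, intro ballI)
      fix p assume p: "p \<in> {p \<in> topspace (prod_topology T ME.mtopology). (\<lambda>(g, u). \<sigma> g u) p \<in> V}"
      obtain g0 A0 where pe: "p = (g0, A0)" by (cases p)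
      have g0: "g0 \<in> carrier G" "A0 \<in> carrier (EE X)" "\<sigma> g0 A0 \<in> V" using p pe top by auto
      obtain \<epsilon> where e: "\<epsilon> > 0" "ME.mball (\<sigma> g0 A0) \<epsilon> \<subseteq> V"
        using V g0(3) ME.openin_mtopology by blast
      have A0: "finite A0" "A0 \<subseteq> X" using g0(2) by (simp_all add: EE_carrier)
      obtain W \<delta> where Wc: "openin T W \<and> g0 \<in> W \<and> 0 < \<delta> \<and>
     (\<forall>g\<in>W. \<forall>A. finite A \<and> A \<subseteq> X \<and> U.nr (symd A0 A) < \<delta> \<longrightarrow> U.nr (symd (\<pi> g0 ` A0) (\<pi> g ` A)) < \<epsilon>)"
        using U.cont_key[OF G top assms(3) assms(4) assms(5) g0(1) A0 e(1)] by (elim exE) (rule that, assumption)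
      have W: "openin T W" "g0 \<in> W" "0 < \<delta>" using Wc by simp_all
      have W4: "U.nr (symd (\<pi> g0 ` A0) (\<pi> g ` A)) < \<epsilon>" if "g \<in> W" "finite A \<and> A \<subseteq> X \<and> U.nr (symd A0 A) < \<delta>" for g A
        using Wc that by blast
      show "\<exists>T'. openin (prod_topology T ME.mtopology) T' \<and> p \<in> T' \<and>
          T' \<subseteq> {p \<in> topspace (prod_topology T ME.mtopology). (\<lambda>(g, u). \<sigma> g u) p \<in> V}"
      proof (intro exI[of _ "W \<times> ME.mball A0 \<delta>"] conjI)
        show "openin (prod_topology T ME.mtopology) (W \<times> ME.mball A0 \<delta>)"
          using W(1) by (simp add: openin_prod_Times_iff)
        show "p \<in> W \<times> ME.mball A0 \<delta>" using pe W(2,3) g0(2) by simp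
        show "W \<times> ME.mball A0 \<delta> \<subseteq> {p \<in> topspace (prod_topology T ME.mtopology). (\<lambda>(g, u). \<sigma> g u) p \<in> V}"
        proof
          fix q assume q: "q \<in> W \<times> ME.mball A0 \<delta>"
          obtain g A where qe: "q = (g, A)" by (cases q)
          have gG: "g \<in> carrier G" using q qe openin_subset[OF W(1)] top by auto
          have A: "A \<in> carrier (EE X)" "norm_dist (EE X) U.nr A0 A < \<delta>" using q qe by auto
          have "U.nr (symd A0 A) < \<delta>" using A g0(2) by (simp add: norm_dist_EE_carrier)
          moreover have "finite A" "A \<subseteq> X" using A(1) by (simp_all add: EE_carrier)
          ultimately have "U.nr (symd (\<pi> g0 ` A0) (\<pi> g ` A)) < \<epsilon>" using W4 q qe by auto
          then have "norm_dist (EE X) U.nr (\<sigma> g0 A0) (\<sigma> g A) < \<epsilon>"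
            using sc[OF g0(1,2)] sc[OF gG A(1)] by (simp add: norm_dist_EE_carrier \<sigma>_def)
          then have "\<sigma> g A \<in> V" using e(2) sc[OF g0(1,2)] sc[OF gG A(1)] by auto
          then show "q \<in> {p \<in> topspace (prod_topology T ME.mtopology). (\<lambda>(g, u). \<sigma> g u) p \<in> V}"
            using qe gG A(1) top by simp
        qed
      qed
    qed
  qed
  have alphaE: "(\<lambda>x. {x}) ` X \<subseteq> carrier (EE X)" by (auto simp: EE_carrier)
  have isom: "\<forall>x\<in>X. \<forall>y\<in>X. norm_dist (EE X) U.nr {x} {y} = d x y"
  proof (intro ballI)
    fix x y assume "x \<in> X" "y \<in> X"
    then show "norm_dist (EE X) U.nr {x} {y} = d x y"
      using U.nr_pair by (simp add: norm_dist_EE_carrier EE_carrier)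
  qed
  have equi: "\<forall>g\<in>carrier G. \<forall>x\<in>X. {\<pi> g x} = \<sigma> g {x}" by (simp add: \<sigma>_def)
  have closed: "closedin ME.mtopology ((\<lambda>x. {x}) ` X)"
    unfolding closedin_def
  proof (intro conjI)
    show "(\<lambda>x. {x}) ` X \<subseteq> topspace ME.mtopology" using alphaE by simp
    show "openin ME.mtopology (topspace ME.mtopology - (\<lambda>x. {x}) ` X)"
      unfolding ME.openin_mtopology
    proof (intro conjI allI impI)
      show "topspace ME.mtopology - (\<lambda>x. {x}) ` X \<subseteq> carrier (EE X)" by simp
      fix A assume A: "A \<in> topspace ME.mtopology - (\<lambda>x. {x}) ` X"
      then have Ac: "A \<in> carrier (EE X)" by simp
      have Af: "finite A" "A \<subseteq> X" using Ac by (simp_all add: EE_carrier)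
      have ns: "A \<noteq> {x}" for x
      proof
        assume "A = {x}"
        then have "x \<in> X" using Af by simp
        then show False using A \<open>A = {x}\<close> by blast
      qed
      obtain r where r: "0 < r" "\<forall>x\<in>X. r \<le> U.nr (symd A {x})" using U.closed_key[OF Af ns] by blast
      show "\<exists>r>0. ME.mball A r \<subseteq> topspace ME.mtopology - (\<lambda>x. {x}) ` X"
      proof (intro exI[of _ r] conjI subsetI)
        show "0 < r" by (rule r(1))
        fix B assume B: "B \<in> ME.mball A r"
        then have Bc: "B \<in> carrier (EE X)" and dB: "U.nr (symd A B) < r"
          using Ac by (auto simp: norm_dist_EE_carrier)
        have "B \<notin> (\<lambda>x. {x}) ` X"
        proof
          assume "B \<in> (\<lambda>x. {x}) ` X"
          then obtain x where "x \<in> X" "B = {x}" by blast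
          then show False using r(2) dB by fastforce
        qed
        then show "B \<in> topspace ME.mtopology - (\<lambda>x. {x}) ` X" using Bc by simp
      qed
    qed
  qed
  show ?thesis
    apply (intro exI[of _ "EE X"] exI[of _ U.nr] exI[of _ \<sigma>] exI[of _ "\<lambda>x. {x}"])
    using EE_boolean U.EE_ultranorm actE isoE contE alphaE isom equi closed by blast
qed



end
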